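(* Let $G$ be a connected graph with $n\ge 13$ vertices. Suppose one of the following holds: (1) $\Delta(G)=n-1$ and $e(G)=n+k$ for some $1\le k\le 10$; (2) $\Delta(G)=n-2$ and $e(G)=n+k$ for some $5\le k\le 10$; (3) $\Delta(G)=n-3$ and $e(G)=n+k$ for some $8\le k\le 10$. Then $\frac{q(G)}{R(G)}<\frac{n}{\sqrt{n-1}}$.
   Context: All graphs are finite and simple; $e(G)$ is the number of edges and $\Delta(G)$ the maximum degree. For a vertex $u$, $d(u)$ is its degree. The Randić index is $R(G)=\sum_{\{u,v\}\in E(G)} \frac{1}{\sqrt{d(u)d(v)}}$. The signless Laplacian is $Q=D+A$ ($D$ the diagonal degree matrix, $A$ the adjacency matrix), and $q(G)$ is its largest eigenvalue. *)

theory Defs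
  imports "HOL-Analysis.Analysis"
begin

definition simple_graph :: "'a set \<Rightarrow> 'a set set \<Rightarrow> bool" where
  "simple_graph V E \<longleftrightarrow> finite V \<and> (\<forall>e\<in>E. \<exists>u v. e = {u, v} \<and> u \<in> V \<and> v \<in> V \<and> u \<noteq> v)"

definition adj :: "'a set set \<Rightarrow> 'a \<Rightarrow> 'a \<Rightarrow> bool" where
  "adj E u v \<longleftrightarrow> {u, v} \<in> E"

definition graph_connected :: "'a set \<Rightarrow> 'a set set \<Rightarrow> bool" where
  "graph_connected V E \<longleftrightarrow> (\<forall>u\<in>V. \<forall>v\<in>V. (adj E)\<^sup>*\<^sup>* u v)"

definition deg :: "'a set set \<Rightarrow> 'a \<Rightarrow> nat" where
  "deg E u = card {v. adj E u v}"

definition max_degree :: "'a set \<Rightarrow> 'a set set \<Rightarrow> nat" where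
  "max_degree V E = Max (deg E ` V)"

definition randic :: "'a set set \<Rightarrow> real" where
  "randic E = (\<Sum>e\<in>E. 1 / sqrt (\<Prod>w\<in>e. real (deg E w)))"

definition signless_lap_eigenvalue :: "'a set \<Rightarrow> 'a set set \<Rightarrow> real \<Rightarrow> bool" where
  "signless_lap_eigenvalue V E lam \<longleftrightarrow>
     (\<exists>x :: 'a \<Rightarrow> real. (\<exists>v\<in>V. x v \<noteq> 0) \<and>
        (\<forall>u\<in>V. real (deg E u) * x u + (\<Sum>v\<in>{v\<in>V. adj E u v}. x v) = lam * x u))"

definition q_index :: "'a set \<Rightarrow> 'a set set \<Rightarrow> real" where
  "q_index V E = Max {lam. signless_lap_eigenvalue V E lam}"

end

theory Submission
  imports Defs "Jordan_Normal_Form.Spectral_Radius"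
begin

lemma sym_kernel_eigen:
  fixes V :: "'a set" and K :: "'a \<Rightarrow> 'a \<Rightarrow> real"
  assumes fin: "finite V" and ne: "V \<noteq> {}" and sym: "\<And>u v. K u v = K v u"
  shows "finite {lam. \<exists>x. (\<exists>v\<in>V. x v \<noteq> 0) \<and> (\<forall>u\<in>V. (\<Sum>y\<in>V. K u y * x y) = lam * x u)}
     \<and> {lam. \<exists>x. (\<exists>v\<in>V. x v \<noteq> 0) \<and> (\<forall>u\<in>V. (\<Sum>y\<in>V. K u y * x y) = lam * x u)} \<noteq> {}"
    (is "finite ?EV \<and> ?EV \<noteq> {}")
proof -
  define n where "n = card V"
  obtain b where b: "bij_betw b {0..<n} V" using ex_bij_betw_nat_finite[OF fin] n_def by blast
  have npos: "n > 0" using fin ne n_def by (simp add: card_gt_0_iff)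
  have reidx: "\<And>g. (\<Sum>j\<in>{0..<n}. g (b j)) = (\<Sum>y\<in>V. g y)"
    using sum.reindex_bij_betw[OF b] by blast
  have bin: "\<And>j. j < n \<Longrightarrow> b j \<in> V" using b bij_betw_apply by fastforce
  define M :: "real mat" where "M = mat n n (\<lambda>(i,j). K (b i) (b j))"
  have M: "M \<in> carrier_mat n n" by (simp add: M_def)
  have sub: "?EV \<subseteq> spectrum M"
  proof
    fix lam assume "lam \<in> ?EV"
    then obtain x where xnz: "\<exists>v\<in>V. x v \<noteq> 0" and xe: "\<forall>u\<in>V. (\<Sum>y\<in>V. K u y * x y) = lam * x u"
      by blast
    define v where "v = vec n (\<lambda>i. x (b i))"
    have vc: "v \<in> carrier_vec n" by (simp add: v_def)
    from xnz obtain u where u: "u \<in> V" "x u \<noteq> 0" by blast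
    then obtain i where i: "i < n" "b i = u" using b unfolding bij_betw_def by auto
    have "v $ i \<noteq> 0" using i u by (simp add: v_def)
    hence vnz: "v \<noteq> 0\<^sub>v n" using i by auto
    have "M *\<^sub>v v = lam \<cdot>\<^sub>v v"
    proof (rule eq_vecI)
      fix i assume "i < dim_vec (lam \<cdot>\<^sub>v v)"
      hence i: "i < n" by (simp add: v_def)
      have "(M *\<^sub>v v) $ i = (\<Sum>j\<in>{0..<n}. K (b i) (b j) * x (b j))"
        using i by (simp add: M_def v_def scalar_prod_def)
      also have "\<dots> = (\<Sum>y\<in>V. K (b i) y * x y)" by (rule reidx)
      also have "\<dots> = lam * x (b i)" using xe bin[OF i] by blast
      finally show "(M *\<^sub>v v) $ i = (lam \<cdot>\<^sub>v v) $ i" using i by (simp add: v_def)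
    qed (simp add: M_def v_def)
    hence "eigenvector M v lam" using vc vnz M unfolding eigenvector_def by auto
    thus "lam \<in> spectrum M" unfolding spectrum_def eigenvalue_def by auto
  qed
  have fin1: "finite ?EV" using finite_subset[OF sub card_finite_spectrum(1)[OF M]] .
  define Mc where "Mc = map_mat complex_of_real M"
  have Mc: "Mc \<in> carrier_mat n n" using M by (simp add: Mc_def)
  obtain mu where "mu \<in> spectrum Mc" using spectrum_non_empty[OF Mc npos] by blast
  then obtain z where zc: "z \<in> carrier_vec n" and znz: "z \<noteq> 0\<^sub>v n" and ze: "Mc *\<^sub>v z = mu \<cdot>\<^sub>v z"
    unfolding spectrum_def eigenvalue_def eigenvector_def using Mc by auto
  define ib where "ib = the_inv_into {0..<n} b"
  have ib: "\<And>y. y \<in> V \<Longrightarrow> ib y < n \<and> b (ib y) = y"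
    using b unfolding ib_def bij_betw_def
    by (metis atLeastLessThan_iff f_the_inv_into_f the_inv_into_into subsetI)
  have ibb: "\<And>j. j < n \<Longrightarrow> ib (b j) = j"
    using b unfolding ib_def bij_betw_def by (simp add: the_inv_into_f_f)
  define zeta where "zeta y = z $ ib y" for y
  have zeq: "\<forall>u\<in>V. (\<Sum>y\<in>V. complex_of_real (K u y) * zeta y) = mu * zeta u"
  proof
    fix u assume u: "u \<in> V"
    define i where "i = ib u"
    have i: "i < n" "b i = u" using ib[OF u] i_def by auto
    have "(Mc *\<^sub>v z) $ i = (\<Sum>j\<in>{0..<n}. complex_of_real (K (b i) (b j)) * z $ j)"
      using i zc by (simp add: Mc_def M_def scalar_prod_def)
    also have "\<dots> = (\<Sum>j\<in>{0..<n}. complex_of_real (K u (b j)) * zeta (b j))"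
      using i by (intro sum.cong) (auto simp: zeta_def ibb)
    also have "\<dots> = (\<Sum>y\<in>V. complex_of_real (K u y) * zeta y)" by (rule reidx)
    finally show "(\<Sum>y\<in>V. complex_of_real (K u y) * zeta y) = mu * zeta u"
      using ze i zc by (simp add: zeta_def i_def[symmetric])
  qed
  have znz2: "\<exists>u\<in>V. zeta u \<noteq> 0"
  proof (rule ccontr)
    assume "\<not> ?thesis"
    hence "\<And>j. j < n \<Longrightarrow> z $ j = 0" using bin ibb unfolding zeta_def by metis
    hence "z = 0\<^sub>v n" using zc by (intro eq_vecI) auto
    thus False using znz by simp
  qed
  define N where "N = (\<Sum>u\<in>V. (cmod (zeta u))^2)"
  have Npos: "N > 0"
  proof -
    from znz2 obtain u where u: "u \<in> V" "zeta u \<noteq> 0" by blast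
    show ?thesis unfolding N_def by (rule sum_pos2[OF fin u(1)]) (use u in auto)
  qed
  define S1 where "S1 = (\<Sum>u\<in>V. cnj (zeta u) * (\<Sum>y\<in>V. complex_of_real (K u y) * zeta y))"
  have S1a: "S1 = mu * complex_of_real N"
  proof -
    have "S1 = (\<Sum>u\<in>V. mu * (zeta u * cnj (zeta u)))"
      unfolding S1_def using zeq by (intro sum.cong refl) (simp add: mult_ac)
    also have "\<dots> = mu * (\<Sum>u\<in>V. complex_of_real ((cmod (zeta u))^2))"
      by (simp add: sum_distrib_left complex_norm_square[symmetric])
    finally show ?thesis by (simp add: N_def)
  qed
  have S1b: "cnj S1 = S1"
  proof -
    have "cnj S1 = (\<Sum>u\<in>V. \<Sum>y\<in>V. complex_of_real (K u y) * zeta u * cnj (zeta y))"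
      unfolding S1_def by (simp add: sum_distrib_left algebra_simps)
    also have "\<dots> = (\<Sum>y\<in>V. \<Sum>u\<in>V. complex_of_real (K u y) * zeta u * cnj (zeta y))"
      by (rule sum.swap)
    also have "\<dots> = S1"
    proof -
      have e: "complex_of_real (K u y) * zeta u * cnj (zeta y) = cnj (zeta y) * (complex_of_real (K y u) * zeta u)" for y u
      proof -
        have "K u y = K y u" by (rule sym)
        thus ?thesis by (simp only: mult_ac)
      qed
      show ?thesis unfolding S1_def sum_distrib_left e ..
    qed
    finally show ?thesis .
  qed
  have "Im S1 = 0" using arg_cong[OF S1b, of Im] by simp
  hence immu: "Im mu = 0" using S1a Npos by simp
  have req: "\<forall>u\<in>V. (\<Sum>y\<in>V. K u y * Re (zeta y)) = Re mu * Re (zeta u)"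
    and ieq: "\<forall>u\<in>V. (\<Sum>y\<in>V. K u y * Im (zeta y)) = Re mu * Im (zeta u)"
  proof -
    show "\<forall>u\<in>V. (\<Sum>y\<in>V. K u y * Re (zeta y)) = Re mu * Re (zeta u)"
    proof
      fix u assume u: "u \<in> V"
      have "Re (\<Sum>y\<in>V. complex_of_real (K u y) * zeta y) = Re (mu * zeta u)" using zeq u by (intro arg_cong[where f=Re]) blast
      thus "(\<Sum>y\<in>V. K u y * Re (zeta y)) = Re mu * Re (zeta u)" using immu by (simp add: Re_sum)
    qed
    show "\<forall>u\<in>V. (\<Sum>y\<in>V. K u y * Im (zeta y)) = Re mu * Im (zeta u)"
    proof
      fix u assume u: "u \<in> V"
      have "Im (\<Sum>y\<in>V. complex_of_real (K u y) * zeta y) = Im (mu * zeta u)" using zeq u by (intro arg_cong[where f=Im]) blast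
      thus "(\<Sum>y\<in>V. K u y * Im (zeta y)) = Re mu * Im (zeta u)" using immu by (simp add: Im_sum)
    qed
  qed
  from znz2 obtain u0 where u0: "u0 \<in> V" "zeta u0 \<noteq> 0" by blast
  have "Re mu \<in> ?EV"
  proof (cases "Re (zeta u0) = 0")
    case True
    hence "Im (zeta u0) \<noteq> 0" using u0 True by (simp add: complex_eq_iff)
    thus ?thesis using ieq u0 by (intro CollectI exI[of _ "\<lambda>y. Im (zeta y)"]) auto
  next
    case False
    thus ?thesis using req u0 by (intro CollectI exI[of _ "\<lambda>y. Re (zeta y)"]) auto
  qed
  thus ?thesis using fin1 by blast
qed

lemma adj_sym: "adj E u v = adj E v u"
  unfolding adj_def by (simp add: insert_commute)

lemma sg_finite: "simple_graph V E \<Longrightarrow> finite V"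
  unfolding simple_graph_def by blast

lemma sg_edge: "simple_graph V E \<Longrightarrow> e \<in> E \<Longrightarrow> \<exists>u v. e = {u, v} \<and> u \<in> V \<and> v \<in> V \<and> u \<noteq> v"
  unfolding simple_graph_def by blast

lemma sg_adj: assumes "simple_graph V E" "adj E u v" shows "u \<in> V" "v \<in> V" "u \<noteq> v"
proof -
  from assms(2) have "{u,v} \<in> E" by (simp add: adj_def)
  from sg_edge[OF assms(1) this] obtain a b where ab: "{u,v} = {a,b}" "a \<in> V" "b \<in> V" "a \<noteq> b"
    by iprover
  from ab(1) have "(u = a \<and> v = b) \<or> (u = b \<and> v = a)" by (simp add: doubleton_eq_iff)
  thus "u \<in> V" "v \<in> V" "u \<noteq> v" using ab by auto
qed

lemma sg_nbr_sub: assumes "simple_graph V E" shows "{v. adj E u v} \<subseteq> V"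
proof
  fix v assume "v \<in> {v. adj E u v}"
  hence "adj E u v" by simp
  thus "v \<in> V" by (rule sg_adj(2)[OF assms])
qed

lemma sg_nbr_fin: assumes "simple_graph V E" shows "finite {v. adj E u v}"
  by (rule finite_subset[OF sg_nbr_sub[OF assms] sg_finite[OF assms]])

lemma sg_card_edge: assumes "simple_graph V E" "e \<in> E" shows "card e = 2"
proof -
  from sg_edge[OF assms] obtain a b where "e = {a,b}" "a \<noteq> b" by iprover
  thus ?thesis by simp
qed

lemma sg_edge_sub: assumes "simple_graph V E" "e \<in> E" shows "e \<subseteq> V"
proof -
  from sg_edge[OF assms] obtain a b where "e = {a,b}" "a \<in> V" "b \<in> V" by iprover
  thus ?thesis by simp
qed

lemma sg_E_fin: assumes "simple_graph V E" shows "finite E"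
proof -
  have "E \<subseteq> Pow V" using sg_edge_sub[OF assms] by (simp add: subset_iff)
  thus ?thesis using sg_finite[OF assms] finite_subset by blast
qed

lemma incident_card: assumes "simple_graph V E"
  shows "card {e\<in>E. u \<in> e} = deg E u"
proof -
  have "bij_betw (\<lambda>v. {u, v}) {v. adj E u v} {e\<in>E. u \<in> e}"
  proof (rule bij_betwI')
    show "\<And>x y. x \<in> {v. adj E u v} \<Longrightarrow> y \<in> {v. adj E u v} \<Longrightarrow> ({u, x} = {u, y}) = (x = y)"
      by (auto simp: doubleton_eq_iff)
    show "\<And>x. x \<in> {v. adj E u v} \<Longrightarrow> {u, x} \<in> {e \<in> E. u \<in> e}" by (auto simp: adj_def)
    fix e assume "e \<in> {e \<in> E. u \<in> e}"
    hence e0: "e \<in> E" "u \<in> e" by auto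
    from sg_edge[OF assms e0(1)] obtain a b where "e = {a,b}" by iprover
    hence e: "e \<in> E" "e = {a,b}" "u \<in> e" using e0 by auto
    show "\<exists>x\<in>{v. adj E u v}. e = {u, x}"
    proof (cases "u = a")
      case True thus ?thesis using e by (auto simp: adj_def)
    next
      case False hence "u = b" using e by auto
      thus ?thesis using e by (auto simp: adj_def insert_commute)
    qed
  qed
  thus ?thesis unfolding deg_def by (simp add: bij_betw_same_card)
qed

lemma handshake: assumes "simple_graph V E"
  shows "(\<Sum>u\<in>V. deg E u) = 2 * card E"
proof -
  have fE: "finite E" by (rule sg_E_fin[OF assms])
  have fV: "finite V" by (rule sg_finite[OF assms])
  have "(\<Sum>u\<in>V. deg E u) = (\<Sum>u\<in>V. \<Sum>e\<in>E. if u \<in> e then 1 else 0)"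
    by (intro sum.cong refl) (simp add: incident_card[OF assms, symmetric] sum.If_cases[OF fE] Int_def)
  also have "\<dots> = (\<Sum>e\<in>E. \<Sum>u\<in>V. if u \<in> e then 1 else 0)" by (rule sum.swap)
  also have "\<dots> = (\<Sum>e\<in>E. 2)"
  proof (intro sum.cong refl)
    fix e assume e: "e \<in> E"
    have "(\<Sum>u\<in>V. if u \<in> e then 1 else 0) = card (V \<inter> e)"
      by (simp add: sum.If_cases[OF fV] Int_def)
    also have "V \<inter> e = e" using sg_edge_sub[OF assms e] by blast
    finally show "(\<Sum>u\<in>V. if u \<in> e then 1 else (0::nat)) = 2" using sg_card_edge[OF assms e] by simp
  qed
  finally show ?thesis by simp
qed

lemma deg_pos: assumes "simple_graph V E" "graph_connected V E" "u \<in> V" "card V \<ge> 2"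
  shows "deg E u \<ge> 1"
proof -
  have fV: "finite V" by (rule sg_finite[OF assms(1)])
  have "V - {u} \<noteq> {}"
  proof
    assume "V - {u} = {}" hence "V \<subseteq> {u}" by blast
    hence "card V \<le> card {u}" by (intro card_mono) auto
    hence "card V \<le> 1" by simp
    thus False using assms(4) by simp
  qed
  then obtain v where v: "v \<in> V" "v \<noteq> u" by blast
  have "(adj E)\<^sup>*\<^sup>* u v" using assms(2,3) v unfolding graph_connected_def by blast
  then obtain x where "adj E u x" using v(2) by (cases rule: converse_rtranclpE) auto
  hence "{v. adj E u v} \<noteq> {}" by blast
  thus ?thesis unfolding deg_def using sg_nbr_fin[OF assms(1)] by (simp add: Suc_le_eq card_gt_0_iff)
qed


lemma eig_bound:
  assumes sg: "simple_graph V E" and dpos: "\<forall>u\<in>V. deg E u \<ge> 1"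
    and hB: "\<forall>u\<in>V. real (deg E u)^2 + (\<Sum>v\<in>{v. adj E u v}. real (deg E v)) \<le> B * real (deg E u)"
    and ev: "signless_lap_eigenvalue V E lam"
  shows "lam \<le> B"
proof -
  obtain x where xnz: "\<exists>v\<in>V. x v \<noteq> 0"
    and xe: "\<forall>u\<in>V. real (deg E u) * x u + (\<Sum>v\<in>{v\<in>V. adj E u v}. x v) = lam * x u"
    using ev unfolding signless_lap_eigenvalue_def by iprover
  have nb: "\<And>u. {v\<in>V. adj E u v} = {v. adj E u v}" using sg_nbr_sub[OF sg] by auto
  have fV: "finite V" by (rule sg_finite[OF sg])
  from xnz obtain v1 where v1: "v1 \<in> V" "x v1 \<noteq> 0" by blast
  have Vne: "V \<noteq> {}" using v1 by auto
  define y where "y u = x u / real (deg E u)" for u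
  have xdy: "\<And>u. u \<in> V \<Longrightarrow> x u = real (deg E u) * y u"
    using dpos unfolding y_def by fastforce
  define Y where "Y = Max ((\<lambda>u. \<bar>y u\<bar>) ` V)"
  have Yge: "\<And>u. u \<in> V \<Longrightarrow> \<bar>y u\<bar> \<le> Y" unfolding Y_def using fV by (intro Max_ge) auto
  have "Y \<in> (\<lambda>u. \<bar>y u\<bar>) ` V" unfolding Y_def using fV Vne by (intro Max_in) auto
  then obtain u0 where u0: "u0 \<in> V" "\<bar>y u0\<bar> = Y" by auto
  have "y v1 \<noteq> 0" using xdy[OF v1(1)] v1(2) by auto
  hence Ypos: "Y > 0" using Yge[OF v1(1)] by linarith
  define d0 where "d0 = real (deg E u0)"
  have d0pos: "d0 \<ge> 1" using dpos u0(1) unfolding d0_def by simp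
  define NS where "NS = {v. adj E u0 v}"
  have NSV: "NS \<subseteq> V" unfolding NS_def by (rule sg_nbr_sub[OF sg])
  have eq: "d0 * x u0 + (\<Sum>v\<in>NS. x v) = lam * x u0"
    using xe u0(1) nb unfolding d0_def NS_def by metis
  have "lam * d0 * (y u0)^2 = y u0 * (lam * x u0)"
    using xdy[OF u0(1)] unfolding d0_def by (simp add: power2_eq_square)
  also have "\<dots> = d0^2 * (y u0)^2 + (\<Sum>v\<in>NS. real (deg E v) * (y v * y u0))"
    unfolding eq[symmetric] using xdy[OF u0(1)] NSV xdy
    by (simp add: algebra_simps power2_eq_square sum_distrib_left d0_def subset_iff)
  also have "\<dots> \<le> d0^2 * Y^2 + (\<Sum>v\<in>NS. real (deg E v) * Y^2)"
  proof -
    have "\<And>v. v \<in> NS \<Longrightarrow> real (deg E v) * (y v * y u0) \<le> real (deg E v) * Y^2"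
    proof -
      fix v assume "v \<in> NS"
      hence "\<bar>y v\<bar> \<le> Y" using Yge NSV by auto
      hence "y v * y u0 \<le> Y * Y" using u0(2)
        by (metis abs_ge_self abs_mult abs_of_nonneg mult_mono' abs_ge_zero order_trans)
      thus "real (deg E v) * (y v * y u0) \<le> real (deg E v) * Y^2"
        by (simp add: mult_left_mono power2_eq_square)
    qed
    hence "(\<Sum>v\<in>NS. real (deg E v) * (y v * y u0)) \<le> (\<Sum>v\<in>NS. real (deg E v) * Y^2)"
      by (rule sum_mono)
    moreover have "(y u0)^2 = Y^2" using u0(2) by (metis power2_abs)
    ultimately show ?thesis by simp
  qed
  also have "\<dots> = (d0^2 + (\<Sum>v\<in>NS. real (deg E v))) * Y^2"
    by (simp add: algebra_simps sum_distrib_right sum_distrib_left)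
  also have "\<dots> \<le> (B * d0) * Y^2"
    using hB u0(1) unfolding d0_def NS_def by (intro mult_right_mono) auto
  finally have "lam * d0 * Y^2 \<le> B * d0 * Y^2" using u0(2) by (metis power2_abs)
  moreover have "d0 * Y^2 > 0" using d0pos Ypos by simp
  ultimately show "lam \<le> B" by (metis mult.assoc mult_le_cancel_right_pos)
qed

lemma lin_helper: fixes P p Q S :: real
  assumes "P - 33/5*p + 121/20 \<le> 0" "S = P - 2*Q" "Q \<ge> 7/5*p - 49/25" shows "S \<le> 2*Q + p + 2"
  using assms by linarith

lemma lin_helper2: fixes p Q S :: real
  assumes "\<not> p \<le> 118/25" "Q \<ge> 7/5*p - 49/25" "S \<le> 16" shows "S \<le> 2*Q + p + 2"
  using assms by linarith

lemma key_both:
  fixes a b :: real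
  assumes a: "a \<ge> 0" "a^2 \<ge> 2" and b: "b \<ge> 0" "b^2 \<ge> 2" and s: "a^2 + b^2 \<le> 16"
  shows "a^2 + b^2 \<le> 2*a*b + a + b + 2"
proof -
  have a1: "a \<ge> 7/5"
  proof (rule ccontr)
    assume "\<not> a \<ge> 7/5" hence "a < 7/5" by simp
    hence "a^2 < (7/5)^2" using a(1) by (intro power_strict_mono) auto
    thus False using a(2) by (simp add: power2_eq_square)
  qed
  have b1: "b \<ge> 7/5"
  proof (rule ccontr)
    assume "\<not> b \<ge> 7/5" hence "b < 7/5" by simp
    hence "b^2 < (7/5)^2" using b(1) by (intro power_strict_mono) auto
    thus False using b(2) by (simp add: power2_eq_square)
  qed
  have q: "(a - 7/5) * (b - 7/5) \<ge> 0" using a1 b1 by simp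
  hence q': "a*b \<ge> 7/5*(a+b) - 49/25" by (simp add: algebra_simps)
  have sq: "a^2 + b^2 = (a+b)^2 - 2*(a*b)" by (simp add: power2_eq_square algebra_simps)
  have "a^2 + b^2 \<le> 2*(a*b) + a + b + 2"
  proof (cases "a + b \<le> 118/25")
    case True
    have "(a + b - 11/10) * (a + b - 11/2) \<le> 0" using True a1 b1
      by (intro mult_nonneg_nonpos) auto
    hence "(a+b)^2 - 33/5*(a+b) + 121/20 \<le> 0" by (simp add: power2_eq_square algebra_simps)
    thus ?thesis using lin_helper[OF _ sq q'] by simp
  next
    case False
    thus ?thesis using lin_helper2[OF _ q' s] by simp
  qed
  thus ?thesis by (simp add: mult.assoc)
qed

definition hh :: "real \<Rightarrow> real" where "hh d = 1 / (d + sqrt d)"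

lemma hh_id: assumes "d \<ge> 1" shows "1 / sqrt d = 1 - (d - 1) * hh d"
proof -
  define r where "r = sqrt d"
  have r: "r \<ge> 1" using assms unfolding r_def by simp
  have dr: "d = r^2" using assms unfolding r_def by simp
  have r0: "r \<noteq> 0" "r + 1 \<noteq> 0" "r^2 + r \<noteq> 0" using r by (auto simp: add_nonneg_eq_0_iff)
  have "1 - (d - 1) * hh d = 1 - (r^2 - 1) / (r^2 + r)" unfolding hh_def r_def[symmetric] dr using r by simp
  also have "(r^2 - 1) / (r^2 + r) = (r - 1) / r"
    using r0 by (simp add: field_simps power2_eq_square)
  finally show ?thesis using r0 unfolding r_def[symmetric] by (simp add: field_simps)
qed

lemma edge_gain:
  fixes du dv Dl s :: real and pu pv :: bool
  assumes du: "1 \<le> du" and dv: "1 \<le> dv" and pu: "pu \<longrightarrow> 2 \<le> du" and pv: "pv \<longrightarrow> 2 \<le> dv"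
    and sum: "du + dv \<le> s" and s16: "s \<le> 16" and D: "4 \<le> Dl"
  shows "2 * (1 - 2 / sqrt Dl) / s \<le>
     1 / sqrt (du * dv) - ((if pu then hh du else 0) + (if pv then hh dv else 0)) / sqrt Dl"
proof -
  define a where "a = sqrt du"
  define b where "b = sqrt dv"
  have a0: "a \<ge> 1" and b0: "b \<ge> 1" using du dv unfolding a_def b_def by auto
  have da: "du = a^2" and db: "dv = b^2" using du dv unfolding a_def b_def by auto
  have sab: "sqrt (du * dv) = a * b" unfolding a_def b_def by (simp add: real_sqrt_mult)
  have ha: "hh du = 1 / (a * (a + 1))" unfolding hh_def da using a0 by (simp add: power2_eq_square algebra_simps)
  have hb: "hh dv = 1 / (b * (b + 1))" unfolding hh_def db using b0 by (simp add: power2_eq_square algebra_simps)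
  have sD: "sqrt Dl \<ge> 2" using D real_sqrt_le_mono[OF D] by simp
  have ab0: "a * b > 0" using a0 b0 by simp
  have a4: "a \<le> 4" and b4: "b \<le> 4"
  proof -
    have "a^2 \<le> 4^2" "b^2 \<le> 4^2" using da db du dv sum s16 by auto
    thus "a \<le> 4" "b \<le> 4" using a0 b0 power2_le_imp_le by (metis zero_le_numeral)+
  qed
  have nz: "a \<noteq> 0" "a + 1 \<noteq> 0" "b \<noteq> 0" "b + 1 \<noteq> 0" using a0 b0 by auto
  have Xa: "a * b * hh du = b / (a + 1)" unfolding ha using nz mult_divide_mult_cancel_left[of a b "a+1"] by simp
  have Xb: "a * b * hh dv = a / (b + 1)" unfolding hb using nz mult_divide_mult_cancel_left[of b a "b+1"] by (simp add: mult.commute)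
  have fa: "b / (a + 1) \<le> 2" using a0 b4 by (simp add: divide_simps)
  have fb: "a / (b + 1) \<le> 2" using b0 a4 by (simp add: divide_simps)
  have fab: "pu \<Longrightarrow> pv \<Longrightarrow> b / (a + 1) + a / (b + 1) \<le> 2"
  proof -
    assume "pu" "pv"
    hence "a^2 \<ge> 2" "b^2 \<ge> 2" using pu pv da db by auto
    hence kb: "a^2 + b^2 \<le> 2*a*b + a + b + 2" using key_both[of a b] a0 b0 da db sum s16 by auto
    have "b / (a + 1) + a / (b + 1) = (b*(b+1) + a*(a+1)) / ((a+1)*(b+1))"
      using a0 b0 by (simp add: field_simps)
    also have "\<dots> \<le> 2"
    proof -
      have pos: "(a+1)*(b+1) > 0" using a0 b0 by simp
      have num: "b*(b+1) + a*(a+1) \<le> 2*((a+1)*(b+1))" using kb by (simp add: algebra_simps power2_eq_square)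
      show ?thesis using pos num by (simp add: divide_le_eq)
    qed
    finally show ?thesis .
  qed
  have KX: "a * b * ((if pu then hh du else 0) + (if pv then hh dv else 0)) \<le> 2"
    using Xa Xb fa fb fab by (cases pu; cases pv) (auto simp: distrib_left)
  have K: "(if pu then hh du else 0) + (if pv then hh dv else 0) \<le> 2 / (a * b)"
    using KX ab0 by (simp add: divide_simps mult.commute)
  have "2 / sqrt Dl \<le> 1" using sD D by (simp add: divide_le_eq_1)
  hence sD0: "1 - 2 / sqrt Dl \<ge> 0" by simp
  have "((if pu then hh du else 0) + (if pv then hh dv else 0)) / sqrt Dl \<le> (2 / (a * b)) / sqrt Dl"
    using K sD D by (intro divide_right_mono) auto
  moreover have "(1 - 2 / sqrt Dl) / (a * b) = 1 / (a * b) - (2 / (a * b)) / sqrt Dl"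
    by (simp add: diff_divide_distrib)
  ultimately have "1 / sqrt (du * dv) - ((if pu then hh du else 0) + (if pv then hh dv else 0)) / sqrt Dl
       \<ge> (1 - 2 / sqrt Dl) / (a * b)"
    unfolding sab by linarith
  moreover have "2 * (1 - 2 / sqrt Dl) / s \<le> (1 - 2 / sqrt Dl) / (a * b)"
  proof -
    have "0 \<le> (a - b)^2" by simp
    hence "2 * (a * b) \<le> a^2 + b^2" by (simp add: power2_eq_square algebra_simps)
    hence "2 * (a * b) \<le> s" using sum da db by linarith
    hence "(1 - 2 / sqrt Dl) / (s / 2) \<le> (1 - 2 / sqrt Dl) / (a * b)"
      using sD0 ab0 by (intro divide_left_mono) auto
    thus ?thesis by (simp add: field_simps)
  qed
  ultimately show ?thesis by linarith
qed


lemma incident_bij: assumes "simple_graph V E"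
  shows "bij_betw (\<lambda>v. {u, v}) {v. adj E u v} {e\<in>E. u \<in> e}"
proof (rule bij_betwI')
  show "\<And>x y. x \<in> {v. adj E u v} \<Longrightarrow> y \<in> {v. adj E u v} \<Longrightarrow> ({u, x} = {u, y}) = (x = y)"
    by (auto simp: doubleton_eq_iff)
  show "\<And>x. x \<in> {v. adj E u v} \<Longrightarrow> {u, x} \<in> {e \<in> E. u \<in> e}" by (auto simp: adj_def)
  fix e assume "e \<in> {e \<in> E. u \<in> e}"
  hence e0: "e \<in> E" "u \<in> e" by auto
  from sg_edge[OF assms e0(1)] obtain a b where "e = {a,b}" by iprover
  hence e: "e \<in> E" "e = {a,b}" "u \<in> e" using e0 by auto
  show "\<exists>x\<in>{v. adj E u v}. e = {u, x}"
  proof (cases "u = a")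
    case True thus ?thesis using e by (auto simp: adj_def)
  next
    case False hence "u = b" using e by auto
    thus ?thesis using e by (auto simp: adj_def insert_commute)
  qed
qed

lemma deg_le_max: assumes "simple_graph V E" "u \<in> V" shows "deg E u \<le> max_degree V E"
  unfolding max_degree_def using assms sg_finite by (intro Max_ge) auto

lemma max_deg_attained: assumes "simple_graph V E" "V \<noteq> {}" shows "\<exists>w\<in>V. deg E w = max_degree V E"
proof -
  have "max_degree V E \<in> deg E ` V" unfolding max_degree_def using assms sg_finite by (intro Max_in) auto
  thus ?thesis by auto
qed

lemma nbr_deg_sum_bound:
  assumes sg: "simple_graph V E" and dpos: "\<forall>v\<in>V. deg E v \<ge> 1" and u: "u \<in> V"
  shows "(\<Sum>v\<in>{v. adj E u v}. deg E v) + card V \<le> 2 * card E + 1"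
proof -
  define N where "N = {v. adj E u v}"
  have fV: "finite V" by (rule sg_finite[OF sg])
  have NV: "N \<subseteq> V" unfolding N_def by (rule sg_nbr_sub[OF sg])
  have uN: "u \<notin> N" unfolding N_def using sg_adj(3)[OF sg] by auto
  have s1: "(\<Sum>v\<in>V. deg E v) = (\<Sum>v\<in>V - N. deg E v) + (\<Sum>v\<in>N. deg E v)"
    by (rule sum.subset_diff[OF NV fV])
  have uVN: "u \<in> V - N" using u uN by auto
  have s2: "(\<Sum>v\<in>V - N. deg E v) = deg E u + (\<Sum>v\<in>V - N - {u}. deg E v)"
    using sum.remove[OF _ uVN, of "deg E"] fV by auto
  have s3: "(\<Sum>v\<in>V - N - {u}. deg E v) \<ge> card (V - N - {u})"
  proof -
    have "(\<Sum>v\<in>V - N - {u}. deg E v) \<ge> (\<Sum>v\<in>V - N - {u}. 1)"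
      using dpos by (intro sum_mono) auto
    thus ?thesis by simp
  qed
  have c1: "card V = card N + card (V - N)"
    using card_Diff_subset[OF finite_subset[OF NV fV] NV] card_mono[OF fV NV] by simp
  have c2: "card (V - N) = card (V - N - {u}) + 1"
    using card_Diff_singleton[of u "V - N"] uVN fV card_gt_0_iff[of "V - N"] by auto
  have dN: "deg E u = card N" unfolding N_def deg_def ..
  have "(\<Sum>v\<in>V. deg E v) = 2 * card E" by (rule handshake[OF sg])
  thus ?thesis using s1 s2 s3 c1 c2 dN unfolding N_def[symmetric] by linarith
qed

lemma hB_alg:
  fixes a S M D :: real
  assumes "1 \<le> a" "a \<le> D" "S \<le> a * D" "S \<le> M" "0 < D"
  shows "a^2 + S \<le> (D + M / D) * a"
proof (cases "a * D \<le> M")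
  case True
  hence "a \<le> M / D" using assms(5) by (simp add: le_divide_eq)
  hence "a * a \<le> (M / D) * a" using assms(1) by (intro mult_right_mono) auto
  thus ?thesis using assms(3) by (simp add: power2_eq_square algebra_simps)
next
  case False
  define p where "p = M / D"
  have "p < a" using False assms(5) unfolding p_def by (simp add: divide_less_eq)
  hence h1: "p * (D - a) \<le> a * (D - a)" using assms(2) by (intro mult_right_mono) auto
  have h2: "p * D = M" using assms(5) unfolding p_def by simp
  have h3: "p * (D - a) = p * D - p * a" "a * (D - a) = D * a - a * a" by (simp_all add: algebra_simps)
  have h4: "(D + M / D) * a = D * a + p * a" "a^2 = a * a" unfolding p_def by (simp_all add: algebra_simps power2_eq_square)
  show ?thesis unfolding h4 using h1 h2 h3 assms(4) by linarith
qed


lemma q_eig_le: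
  assumes sg: "simple_graph V E" and dpos: "\<forall>v\<in>V. deg E v \<ge> 1"
    and Dpos: "max_degree V E \<ge> 1" and Dle: "max_degree V E + 1 \<le> card V"
    and ev: "signless_lap_eigenvalue V E lam"
  shows "lam \<le> real (max_degree V E) - 1 + 2 * real (card E) / real (max_degree V E)"
proof -
  define D where "D = real (max_degree V E)"
  define M where "M = 2 * real (card E) - D"
  have D0: "D > 0" using Dpos unfolding D_def by simp
  have B: "D + M / D = real (max_degree V E) - 1 + 2 * real (card E) / real (max_degree V E)"
    unfolding M_def D_def[symmetric] using D0 by (simp add: diff_divide_distrib)
  have hB: "\<forall>u\<in>V. real (deg E u)^2 + (\<Sum>v\<in>{v. adj E u v}. real (deg E v)) \<le> (D + M / D) * real (deg E u)"
  proof
    fix u assume u: "u \<in> V"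
    define S where "S = (\<Sum>v\<in>{v. adj E u v}. real (deg E v))"
    have a1: "1 \<le> real (deg E u)" using dpos u by simp
    have a2: "real (deg E u) \<le> D" unfolding D_def using deg_le_max[OF sg u] by simp
    have a3: "S \<le> real (deg E u) * D"
    proof -
      have "S \<le> real (card {v. adj E u v}) * D" unfolding S_def D_def
        using deg_le_max[OF sg] sg_nbr_sub[OF sg] by (intro sum_bounded_above) auto
      thus ?thesis unfolding deg_def .
    qed
    have a4: "S \<le> M"
    proof -
      have "(\<Sum>v\<in>{v. adj E u v}. deg E v) + card V \<le> 2 * card E + 1"
        by (rule nbr_deg_sum_bound[OF sg dpos u])
      hence "real ((\<Sum>v\<in>{v. adj E u v}. deg E v) + card V) \<le> real (2 * card E + 1)"
        by (simp only: of_nat_le_iff)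
      hence "real (\<Sum>v\<in>{v. adj E u v}. deg E v) + real (card V) \<le> 2 * real (card E) + 1"
        by simp
      moreover have "real (max_degree V E) + 1 \<le> real (card V)" using Dle by linarith
      ultimately show ?thesis unfolding S_def M_def D_def by (simp add: of_nat_sum)
    qed
    show "real (deg E u)^2 + (\<Sum>v\<in>{v. adj E u v}. real (deg E v)) \<le> (D + M / D) * real (deg E u)"
      using hB_alg[OF a1 a2 a3 a4 D0] unfolding S_def .
  qed
  have "lam \<le> D + M / D" by (rule eig_bound[OF sg dpos hB ev])
  thus ?thesis using B by simp
qed

lemma card_two_sub_eq: assumes "finite e" "card e = 2" "a \<in> e" "b \<in> e" "a \<noteq> b" shows "e = {a, b}"
proof -
  have s: "{a,b} \<subseteq> e" using assms by simp
  have c: "card {a,b} = card e" using assms by simp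
  have "{a,b} = e" by (rule card_subset_eq[OF assms(1) s c])
  thus ?thesis by (rule sym)
qed


lemma randic_lb:
  assumes sg: "simple_graph V E" and dpos: "\<forall>v\<in>V. deg E v \<ge> 1" and w: "w \<in> V"
    and D10: "deg E w \<ge> 10" and f13: "card E \<le> deg E w + 13"
  shows "randic E \<ge> sqrt (real (deg E w)) + real (card E - deg E w) *
           (2 * (1 - 2 / sqrt (real (deg E w))) / (real (card E - deg E w) + 3))"
proof -
  define Dl where "Dl = deg E w"
  define L where "L = {v. adj E w v}"
  define W where "W = {e\<in>E. w \<in> e}"
  define F where "F = {e\<in>E. w \<notin> e}"
  define f where "f = card E - Dl"
  define r where "r e = 1 / sqrt (\<Prod>x\<in>e. real (deg E x))" for e
  define g where "g v = hh (real (deg E v))" for v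
  define IF where "IF x = {e\<in>F. x \<in> e}" for x
  define c0 where "c0 = 2 * (1 - 2 / sqrt (real Dl)) / (real f + 3)"
  have fE: "finite E" by (rule sg_E_fin[OF sg])
  have fV: "finite V" by (rule sg_finite[OF sg])
  have EWF: "E = W \<union> F" "W \<inter> F = {}" unfolding W_def F_def by auto
  have fW: "finite W" and fF: "finite F" using fE unfolding W_def F_def by auto
  have fL: "finite L" unfolding L_def by (rule sg_nbr_fin[OF sg])
  have fIF: "\<And>x. finite (IF x)" unfolding IF_def using fF by auto
  have cW: "card W = Dl" unfolding W_def Dl_def by (rule incident_card[OF sg])
  have cE: "card E = card W + card F" using card_Un_disjoint[OF fW fF EWF(2)] EWF(1) by simp
  have cF: "card F = f" unfolding f_def using cE cW by simp
  have f13': "f \<le> 13" unfolding f_def Dl_def using f13 by simp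
  have cL: "card L = Dl" unfolding L_def Dl_def deg_def ..
  have Dpos: "real Dl \<ge> 10" unfolding Dl_def using D10 by simp
  have sD: "sqrt (real Dl) > 0" using Dpos by simp
  have R1: "randic E = (\<Sum>e\<in>W. r e) + (\<Sum>e\<in>F. r e)"
    unfolding randic_def r_def using sum.union_disjoint[OF fW fF EWF(2)] EWF(1) by simp
  have Lw: "v \<noteq> w \<and> v \<in> V \<and> {w, v} \<in> E" if v: "v \<in> L" for v
  proof -
    have a: "adj E w v" using v unfolding L_def by simp
    show ?thesis using sg_adj[OF sg a] a unfolding adj_def by auto
  qed
  have R2: "(\<Sum>e\<in>W. r e) = (\<Sum>v\<in>L. r {w, v})"
    using sum.reindex_bij_betw[OF incident_bij[OF sg, of w], of r] unfolding L_def W_def by simp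
  have inc_sub: "\<And>x. x \<noteq> w \<Longrightarrow> {e\<in>E. x \<in> e} \<subseteq> insert {x, w} (IF x)"
  proof
    fix x e assume xw: "x \<noteq> w" and e: "e \<in> {e\<in>E. x \<in> e}"
    show "e \<in> insert {x, w} (IF x)"
    proof (cases "w \<in> e")
      case True
      have "e = {x, w}" using card_two_sub_eq[of e x w] e True xw sg_card_edge[OF sg] fE
        sg_edge_sub[OF sg] fV finite_subset by (metis (no_types, lifting) mem_Collect_eq)
      thus ?thesis by simp
    next
      case False thus ?thesis using e unfolding IF_def F_def by simp
    qed
  qed
  have degIF: "real (deg E v) = real (card (IF v)) + 1" if v: "v \<in> L" for v
  proof -
    have vw: "v \<noteq> w" and wvE: "{w, v} \<in> E" using Lw[OF v] by auto
    have "{e\<in>E. v \<in> e} = insert {v, w} (IF v)"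
    proof
      show "{e\<in>E. v \<in> e} \<subseteq> insert {v, w} (IF v)" by (rule inc_sub[OF vw])
      show "insert {v, w} (IF v) \<subseteq> {e\<in>E. v \<in> e}" using wvE unfolding IF_def F_def
        by (auto simp: insert_commute)
    qed
    moreover have "{v, w} \<notin> IF v" unfolding IF_def F_def by simp
    ultimately have "card {e\<in>E. v \<in> e} = card (IF v) + 1" using fIF[of v] by simp
    thus ?thesis using incident_card[OF sg, of v] by simp
  qed
  have rwv: "r {w, v} = (1 / sqrt (real Dl)) * (1 - real (card (IF v)) * g v)" if v: "v \<in> L" for v
  proof -
    have vw: "v \<noteq> w" using Lw[OF v] by auto
    have dv: "real (deg E v) \<ge> 1" using dpos Lw[OF v] by simp
    have "r {w, v} = 1 / sqrt (real Dl * real (deg E v))"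
      unfolding r_def Dl_def using vw by simp
    also have "\<dots> = (1 / sqrt (real Dl)) * (1 / sqrt (real (deg E v)))" by (simp add: real_sqrt_mult)
    also have "1 / sqrt (real (deg E v)) = 1 - (real (deg E v) - 1) * hh (real (deg E v))"
      by (rule hh_id[OF dv])
    finally show ?thesis unfolding g_def using degIF[OF v] by simp
  qed
  have R3: "(\<Sum>v\<in>L. r {w, v}) = sqrt (real Dl) - (1 / sqrt (real Dl)) * (\<Sum>v\<in>L. real (card (IF v)) * g v)"
  proof -
    have "(\<Sum>v\<in>L. r {w, v}) = (\<Sum>v\<in>L. (1 / sqrt (real Dl)) * (1 - real (card (IF v)) * g v))"
      using rwv by (intro sum.cong) auto
    also have "\<dots> = (1 / sqrt (real Dl)) * (\<Sum>v\<in>L. (1 - real (card (IF v)) * g v))"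
      by (rule sum_distrib_left[symmetric])
    also have "(\<Sum>v\<in>L. (1 - real (card (IF v)) * g v)) = real Dl - (\<Sum>v\<in>L. real (card (IF v)) * g v)"
      by (simp add: sum_subtractf cL)
    also have "real Dl / sqrt (real Dl) = sqrt (real Dl)" using Dpos by (simp add: real_div_sqrt)
    hence "(1 / sqrt (real Dl)) * (real Dl - (\<Sum>v\<in>L. real (card (IF v)) * g v))
        = sqrt (real Dl) - (1 / sqrt (real Dl)) * (\<Sum>v\<in>L. real (card (IF v)) * g v)"
      by (simp add: right_diff_distrib)
    finally show ?thesis .
  qed
  define P where "P e = (\<Sum>v\<in>L. if v \<in> e then g v else 0)" for e
  have R4: "(\<Sum>v\<in>L. real (card (IF v)) * g v) = (\<Sum>e\<in>F. P e)"
  proof -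
    have "\<And>v. real (card (IF v)) * g v = (\<Sum>e\<in>F. if v \<in> e then g v else 0)"
      unfolding IF_def using sum.inter_filter[OF fF, of "\<lambda>_. g _" ] by (simp add: sum.inter_filter[OF fF, symmetric])
    hence "(\<Sum>v\<in>L. real (card (IF v)) * g v) = (\<Sum>v\<in>L. \<Sum>e\<in>F. if v \<in> e then g v else 0)" by simp
    also have "\<dots> = (\<Sum>e\<in>F. \<Sum>v\<in>L. if v \<in> e then g v else 0)" by (rule sum.swap)
    finally show ?thesis unfolding P_def .
  qed
  have R5: "randic E = sqrt (real Dl) + (\<Sum>e\<in>F. r e - P e / sqrt (real Dl))"
    unfolding R1 R2 R3 R4 by (simp add: sum_subtractf sum_divide_distrib)
  have inc: "deg E x \<le> card (IF x) + 1" if xw: "x \<noteq> w" for x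
  proof -
    have "card {e\<in>E. x \<in> e} \<le> card (insert {x, w} (IF x))"
      using inc_sub[OF xw] fIF[of x] by (intro card_mono) auto
    also have "\<dots> \<le> card (IF x) + 1" using fIF[of x] by (simp add: card_insert_if)
    finally show ?thesis using incident_card[OF sg, of x] by simp
  qed
  have deg2: "2 \<le> deg E x" if x: "x \<in> L" and y: "{x, y} \<in> E" "y \<noteq> w" for x y
  proof -
    have "adj E w x" using x unfolding L_def by simp
    hence "adj E x w" by (simp add: adj_sym)
    moreover have "adj E x y" using y unfolding adj_def by simp
    ultimately have "{w, y} \<subseteq> {v. adj E x v}" by simp
    hence "card {w, y} \<le> card {v. adj E x v}" using sg_nbr_fin[OF sg] by (intro card_mono) auto
    thus ?thesis using y(2) unfolding deg_def by simp
  qed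
  have edge: "c0 \<le> r e - P e / sqrt (real Dl)" if e: "e \<in> F" for e
  proof -
    have eE: "e \<in> E" and we: "w \<notin> e" using e unfolding F_def by auto
    from sg_edge[OF sg eE] obtain a b where ab: "e = {a,b}" "a \<in> V" "b \<in> V" "a \<noteq> b" by iprover
    have aw: "a \<noteq> w" "b \<noteq> w" using we ab(1) by auto
    have re: "r e = 1 / sqrt (real (deg E a) * real (deg E b))" unfolding r_def ab(1) using ab(4) by simp
    have Pe: "P e = (if a \<in> L then g a else 0) + (if b \<in> L then g b else 0)"
    proof -
      have "P e = sum g (L \<inter> e)" unfolding P_def using sum.inter_restrict[OF fL, of g e] by simp
      also have "L \<inter> e = e \<inter> L" by (rule Int_commute)
      also have "sum g (e \<inter> L) = (\<Sum>v\<in>e. if v \<in> L then g v else 0)"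
        using sum.inter_restrict[of e g L] ab(1) by simp
      also have "\<dots> = (if a \<in> L then g a else 0) + (if b \<in> L then g b else 0)"
        unfolding ab(1) using ab(4) by simp
      finally show ?thesis .
    qed
    have da: "1 \<le> real (deg E a)" "1 \<le> real (deg E b)" using dpos ab by auto
    have pa: "a \<in> L \<longrightarrow> 2 \<le> real (deg E a)" using deg2[of a b] eE ab aw by auto
    have pb: "b \<in> L \<longrightarrow> 2 \<le> real (deg E b)" using deg2[of b a] eE ab aw by (auto simp: insert_commute)
    have sumab: "deg E a + deg E b \<le> f + 3"
    proof -
      have un: "IF a \<union> IF b \<subseteq> F" unfolding IF_def by auto
      have int: "IF a \<inter> IF b \<subseteq> {e}"
      proof
        fix e' assume "e' \<in> IF a \<inter> IF b"
        hence e': "e' \<in> E" "a \<in> e'" "b \<in> e'" unfolding IF_def F_def by auto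
        have "finite e'" using sg_edge_sub[OF sg e'(1)] fV finite_subset by auto
        hence "e' = {a, b}" using card_two_sub_eq[of e' a b] e' sg_card_edge[OF sg e'(1)] ab(4) by simp
        thus "e' \<in> {e}" using ab(1) by simp
      qed
      have c1: "card (IF a \<union> IF b) \<le> f" using card_mono[OF fF un] cF by simp
      have c2: "card (IF a \<inter> IF b) \<le> 1" using card_mono[OF _ int] by simp
      have c3: "card (IF a) + card (IF b) = card (IF a \<union> IF b) + card (IF a \<inter> IF b)"
        by (rule card_Un_Int[OF fIF fIF])
      show ?thesis using inc[OF aw(1)] inc[OF aw(2)] c1 c2 c3 by linarith
    qed
    have s1: "real (deg E a) + real (deg E b) \<le> real f + 3" using sumab by (simp add: of_nat_add[symmetric] del: of_nat_add)
    have s2: "real f + 3 \<le> 16" using f13' by simp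
    have D4: "4 \<le> real Dl" using Dpos by simp
    have "c0 \<le> 1 / sqrt (real (deg E a) * real (deg E b)) -
       ((if a \<in> L then hh (real (deg E a)) else 0) + (if b \<in> L then hh (real (deg E b)) else 0)) / sqrt (real Dl)"
      unfolding c0_def by (rule edge_gain[OF da pa pb s1 s2 D4])
    thus ?thesis using re Pe unfolding g_def by simp
  qed
  have "real (card F) * c0 \<le> (\<Sum>e\<in>F. r e - P e / sqrt (real Dl))"
    by (rule sum_bounded_below) (use edge in auto)
  hence "randic E \<ge> sqrt (real Dl) + real f * c0" using R5 cF by simp
  thus ?thesis unfolding c0_def f_def Dl_def by simp
qed


lemma G_pos:
  fixes u f t s :: real
  assumes s: "s \<ge> 79/25"
    and c: "(t = 0 \<and> u \<ge> 12 \<and> 2 \<le> f \<and> f \<le> 11) \<or> (t = 1 \<and> u \<ge> 11 \<and> 7 \<le> f \<and> f \<le> 12)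
            \<or> (t = 2 \<and> u \<ge> 10 \<and> 11 \<le> f \<and> f \<le> 13)"
  shows "(f+3)*t*(u^2 - u - 2*f) + 4*f*u*((s-2)*(u+1+t) - (f+3)) > 0"
proof -
  have u0: "u \<ge> 10" "f > 0" using c by auto
  have uu: "u^2 \<ge> 10*u" using u0 by (simp add: power2_eq_square mult_right_mono)
  have fu: "4*f*u > 0" using u0 by simp
  define X where "X = (s-2)*(u+1+t)"
  have sm0: "X \<ge> 29/25*(u+1+t)" unfolding X_def using s c by (intro mult_right_mono) auto
  hence sm: "25*X \<ge> 29*u+29+29*t" by simp
  from c consider (a) "t = 0" "u \<ge> 12" "2 \<le> f" "f \<le> 11" | (b) "t = 1" "u \<ge> 11" "7 \<le> f" "f \<le> 12"
    | (c) "t = 2" "u \<ge> 10" "11 \<le> f" "f \<le> 13" by blast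
  then have main: "(f+3)*t*(u^2 - u - 2*f) + 4*f*u*(X - (f+3)) > 0"
  proof cases
    case a
    have "X - (f+3) > 0" using sm a by linarith
    hence "4*f*u*(X - (f+3)) > 0" using fu by simp
    thus ?thesis using a by simp
  next
    case b
    have "X - (f+3) > 0" using sm b by linarith
    hence "4*f*u*(X - (f+3)) > 0" using fu by simp
    moreover have "(f+3)*t*(u^2 - u - 2*f) \<ge> 0" using b uu by simp
    ultimately show ?thesis by linarith
  next
    case c
    have B2: "25*X - 25*f - 75 \<ge> -23" using sm c by linarith
    hence B2: "X - (f+3) \<ge> -23/25" by simp
    have "4*f*u*(X - (f+3)) \<ge> 4*f*u*(-23/25)"
      using B2 fu by (intro mult_left_mono) auto
    hence A1: "4*f*u*(X - (f+3)) \<ge> -(92/25)*(f*u)" by simp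
    have "5*u^2 - 5*u - 10*f \<ge> 32 * u" using uu c by linarith
    hence "u^2 - u - 2*f \<ge> 32/5 * u" by linarith
    hence P: "(f+3)*(u^2 - u - 2*f) \<ge> (f+3)*(32/5*u)" using c by (intro mult_left_mono) auto
    have "64/5*(f*u) + 192/5*u = 2*((f+3)*(32/5*u))" by (simp add: algebra_simps)
    also have "\<dots> \<le> 2*((f+3)*(u^2 - u - 2*f))" using P by linarith
    also have "\<dots> = (f+3)*t*(u^2 - u - 2*f)" using c by simp
    finally have A2: "(f+3)*t*(u^2 - u - 2*f) \<ge> 64/5*(f*u) + 192/5*u" .
    have A3: "f*u \<ge> 0" "u > 0" using c by auto
    show ?thesis using A1 A2 A3 by linarith
  qed
  thus ?thesis unfolding X_def .
qed

lemma final_real: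
  fixes f t s r :: real
  assumes s: "s > 0" and f: "f \<ge> 0" and t: "t \<ge> 0"
    and r: "r \<ge> 0" "r^2 = s^2 + t"
    and G: "(f+3)*t*((s^2)^2 - s^2 - 2*f) + 4*f* s^2*((s-2)*(s^2+1+t) - (f+3)) > 0"
  shows "(s^2 + 1 + 2*f/s^2) * r < (s^2+1+t) * (s + f * (2 * (1 - 2/s) / (f+3)))"
proof -
  have u: "s^2 > 0" using s by simp
  have rle: "r \<le> s + t/(2* s)"
  proof -
    have "(s + t/(2* s))^2 = s^2 + t + (t/(2* s))^2" using s by (simp add: power2_eq_square field_simps)
    hence "r^2 \<le> (s + t/(2* s))^2" using r by simp
    moreover have "s + t/(2* s) \<ge> 0" using s t by simp
    ultimately show ?thesis using r(1) power2_le_imp_le by blast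
  qed
  have X: "(s^2 + 1 + 2*f/s^2) * r \<le> (s^2 + 1 + 2*f/s^2) * (s + t/(2* s))"
    using rle u f by (intro mult_left_mono) auto
  define c where "c = 2* s^2* s*(f+3)"
  have c: "c > 0" unfolding c_def using u s f by simp
  have L: "(s^2 + 1 + 2*f/s^2) * (s + t/(2* s)) * c = ((s^2)^2+s^2+2*f)*(2* s^2+t)*(f+3)"
    unfolding c_def using u s f by (simp add: field_simps power2_eq_square)
  have R: "(s^2+1+t) * (s + f * (2 * (1 - 2/s) / (f+3))) * c = 2* s^2*(s^2+1+t)*(s^2*(f+3)+2*f*(s-2))"
  proof -
    have "f* s + s*3 > 0" using s f by (simp add: add_nonneg_pos)
    hence nz: "f + 3 \<noteq> 0" "s \<noteq> 0" "s*(f+3) \<noteq> 0" "f* s + s*3 \<noteq> 0" using s f by (auto simp: algebra_simps)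
    have "f * (2 * (1 - 2/s) / (f+3)) = 2*f*(s-2)/(s*(f+3))" using nz by (simp add: field_simps)
    thus ?thesis unfolding c_def using nz by (simp add: field_simps power2_eq_square)
  qed
  have P: "((s^2)^2+s^2+2*f)*(2* s^2+t)*(f+3) < 2* s^2*(s^2+1+t)*(s^2*(f+3)+2*f*(s-2))"
  proof -
    have "2* s^2*(s^2+1+t)*(s^2*(f+3)+2*f*(s-2)) - ((s^2)^2+s^2+2*f)*(2* s^2+t)*(f+3)
        = (f+3)*t*((s^2)^2 - s^2 - 2*f) + 4*f* s^2*((s-2)*(s^2+1+t) - (f+3))"
      by (simp add: algebra_simps power2_eq_square)
    thus ?thesis using G by linarith
  qed
  have "(s^2 + 1 + 2*f/s^2) * (s + t/(2* s)) < (s^2+1+t) * (s + f * (2 * (1 - 2/s) / (f+3)))"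
    using P L R c by (metis mult_less_cancel_right_pos)
  thus ?thesis using X by linarith
qed

theorem lemma3p10:
  fixes V :: "'a set" and E :: "'a set set" and n k :: nat
  assumes "simple_graph V E"
    and "graph_connected V E"
    and "card V = n"
    and "n \<ge> 13"
    and "(max_degree V E = n - 1 \<and> card E = n + k \<and> 1 \<le> k \<and> k \<le> 10)
       \<or> (max_degree V E = n - 2 \<and> card E = n + k \<and> 5 \<le> k \<and> k \<le> 10)
       \<or> (max_degree V E = n - 3 \<and> card E = n + k \<and> 8 \<le> k \<and> k \<le> 10)"
  shows "q_index V E / randic E < real n / sqrt (real n - 1)"
proof -
  note sg = assms(1) and conn = assms(2) and cV = assms(3) and n13 = assms(4) and hc = assms(5)
  have fV: "finite V" by (rule sg_finite[OF sg])
  have Vne: "V \<noteq> {}" using cV n13 by auto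
  have dpos: "\<forall>v\<in>V. deg E v \<ge> 1" using deg_pos[OF sg conn] cV n13 by auto
  obtain w where w: "w \<in> V" "deg E w = max_degree V E" using max_deg_attained[OF sg Vne] by blast
  define Dl where "Dl = max_degree V E"
  obtain t where t: "t \<le> 2" "Dl = n - 1 - t" "card E = n + k"
    and tk: "(t = 0 \<and> 1 \<le> k \<and> k \<le> 10) \<or> (t = 1 \<and> 5 \<le> k \<and> k \<le> 10) \<or> (t = 2 \<and> 8 \<le> k \<and> k \<le> 10)"
  proof -
    from hc consider (a) "Dl = n - 1" "card E = n + k" "1 \<le> k" "k \<le> 10"
      | (b) "Dl = n - 2" "card E = n + k" "5 \<le> k" "k \<le> 10"
      | (c) "Dl = n - 3" "card E = n + k" "8 \<le> k" "k \<le> 10" unfolding Dl_def by blast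
    thus ?thesis
    proof cases
      case a thus ?thesis using that[of 0] by simp
    next
      case b thus ?thesis using that[of 1] by simp
    next
      case c thus ?thesis using that[of 2] n13 by simp
    qed
  qed
  have D10: "Dl \<ge> 10" using t n13 by linarith
  have Dn: "Dl + 1 + t = n" using t n13 by linarith
  define f where "f = k + 1 + t"
  have mf: "card E = Dl + f" unfolding f_def using t Dn by linarith
  have f13: "f \<le> 13" unfolding f_def using tk by linarith
  define K where "K u y = (if u = y then real (deg E u) else 0) + (if adj E u y then 1 else 0)" for u y
  have Ksym: "\<And>u v. K u v = K v u" unfolding K_def by (auto simp: adj_sym)
  have key: "(\<Sum>y\<in>V. K u y * x y) = real (deg E u) * x u + (\<Sum>v\<in>{v\<in>V. adj E u v}. x v)"
    if u: "u \<in> V" for u and x :: "'a \<Rightarrow> real"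
  proof -
    have "(\<Sum>y\<in>V. K u y * x y) = (\<Sum>y\<in>V. (if u = y then real (deg E u) * x y else 0)) + (\<Sum>y\<in>V. (if adj E u y then x y else 0))"
    proof -
      have pt: "K u y * x y = (if u = y then real (deg E u) * x y else 0) + (if adj E u y then x y else 0)" for y
        unfolding K_def by (cases "u = y"; cases "adj E u y") (simp_all add: distrib_right)
      show ?thesis unfolding pt by (rule sum.distrib)
    qed
    also have "(\<Sum>y\<in>V. (if u = y then real (deg E u) * x y else 0)) = real (deg E u) * x u"
      using fV u by simp
    also have "(\<Sum>y\<in>V. (if adj E u y then x y else 0)) = (\<Sum>v\<in>{v\<in>V. adj E u v}. x v)"
      using sum.inter_filter[OF fV, of x "adj E u"] by simp
    finally show ?thesis .
  qed
  have eqS: "{lam. \<exists>x. (\<exists>v\<in>V. x v \<noteq> 0) \<and> (\<forall>u\<in>V. (\<Sum>y\<in>V. K u y * x y) = lam * x u)}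
      = {lam. signless_lap_eigenvalue V E lam}"
    unfolding signless_lap_eigenvalue_def
    by (intro Collect_cong ex_cong1 conj_cong refl ball_cong) (simp add: key)
  have SS: "finite {lam. signless_lap_eigenvalue V E lam}" "{lam. signless_lap_eigenvalue V E lam} \<noteq> {}"
    using sym_kernel_eigen[of V K, OF fV Vne Ksym] unfolding eqS by auto
  have qin: "signless_lap_eigenvalue V E (q_index V E)"
    using Max_in[OF SS] unfolding q_index_def by simp
  have qB: "q_index V E \<le> real Dl - 1 + 2 * real (card E) / real Dl"
    unfolding Dl_def by (rule q_eig_le[OF sg dpos _ _ qin]) (use D10 Dn cV in \<open>auto simp: Dl_def\<close>)
  have RL: "randic E \<ge> sqrt (real (deg E w)) + real (card E - deg E w) *
           (2 * (1 - 2 / sqrt (real (deg E w))) / (real (card E - deg E w) + 3))"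
    by (rule randic_lb[OF sg dpos w(1)]) (use w D10 mf f13 in \<open>auto simp: Dl_def\<close>)
  have wD: "deg E w = Dl" "card E - Dl = f" using w mf unfolding Dl_def by auto
  define s where "s = sqrt (real Dl)"
  define r where "r = sqrt (real n - 1)"
  define rf where "rf = real f"
  define rt where "rt = real t"
  have s0: "s > 0" and s2: "s^2 = real Dl" unfolding s_def using D10 by auto
  have s79: "s \<ge> 79/25"
  proof -
    have "sqrt ((79/25)^2) \<le> sqrt (real Dl)" using D10 by (intro real_sqrt_le_mono) (simp add: power2_eq_square)
    thus ?thesis unfolding s_def by simp
  qed
  have nreal: "real n = s^2 + 1 + rt" unfolding s2 rt_def using Dn by linarith
  have r0: "r \<ge> 0" and r2: "r^2 = s^2 + rt" unfolding r_def using nreal n13 by auto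
  have rf0: "rf \<ge> 0" and rt0: "rt \<ge> 0" unfolding rf_def rt_def by auto
  have G: "(rf+3)*rt*((s^2)^2 - s^2 - 2*rf) + 4*rf* s^2*((s-2)*(s^2+1+rt) - (rf+3)) > 0"
  proof (rule G_pos[OF s79])
    show "(rt = 0 \<and> s^2 \<ge> 12 \<and> 2 \<le> rf \<and> rf \<le> 11) \<or> (rt = 1 \<and> s^2 \<ge> 11 \<and> 7 \<le> rf \<and> rf \<le> 12)
            \<or> (rt = 2 \<and> s^2 \<ge> 10 \<and> 11 \<le> rf \<and> rf \<le> 13)"
      using tk Dn n13 unfolding s2 rt_def rf_def f_def by auto
  qed
  have FR: "(s^2 + 1 + 2*rf/s^2) * r < (s^2+1+rt) * (s + rf * (2 * (1 - 2/s) / (rf+3)))"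
    by (rule final_real[OF s0 rf0 rt0 r0 r2 G])
  define B where "B = real Dl - 1 + 2 * real (card E) / real Dl"
  define Rl where "Rl = s + rf * (2 * (1 - 2/s) / (rf+3))"
  have BB: "B = s^2 + 1 + 2*rf/s^2"
    unfolding B_def s2 rf_def using mf D10 by (simp add: field_simps)
  have FR': "B * r < real n * Rl" using FR unfolding BB Rl_def nreal .
  have RL': "randic E \<ge> Rl" using RL unfolding wD Rl_def s_def rf_def by simp
  have Rl0: "Rl > 0"
  proof -
    have "2 / s \<le> 1" using s79 s0 by (simp add: divide_le_eq_1)
    hence "rf * (2 * (1 - 2/s) / (rf+3)) \<ge> 0" using rf0 by simp
    thus ?thesis unfolding Rl_def using s0 by linarith
  qed
  have B0: "B \<ge> 0" unfolding BB using s0 rf0 by simp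
  have rpos: "r > 0" unfolding r_def using n13 by simp
  have R0: "randic E > 0" using RL' Rl0 by linarith
  have "q_index V E / randic E \<le> B / randic E"
    using qB R0 unfolding B_def by (intro divide_right_mono) auto
  also have "\<dots> \<le> B / Rl" using B0 Rl0 RL' by (intro divide_left_mono) auto
  also have "\<dots> < real n / r"
  proof -
    have "B / Rl = (B * r) / (Rl * r)" using rpos by simp
    also have "\<dots> < (real n * Rl) / (Rl * r)" using FR' Rl0 rpos by (intro divide_strict_right_mono) auto
    also have "\<dots> = real n / r" using Rl0 by simp
    finally show ?thesis .
  qed
  finally show ?thesis unfolding r_def .
qed

end
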